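(* Let $T$ be a tree on $n\ge3$ vertices and $k\ge2$ even. Then the order-$k$ Steiner distance hypermatrix $M$ of $T$ is conditionally strictly negative definite, i.e., $M(\mathbf{c},\ldots,\mathbf{c})<0$ for every nonzero $\mathbf{c}\in\mathbb{R}^n$ with $\sum_{i=1}^n c_i=0$.
   Context: $T$ is a tree with vertex set $\{1,\dots,n\}$. For $U\subseteq V(T)$, the Steiner distance $S(U)$ is the minimum number of edges of a connected subgraph of $T$ whose vertex set contains $U$. The order-$k$ Steiner distance hypermatrix $M$ has entries $M_{(i_1,\dots,i_k)}=S(\{i_1,\dots,i_k\})$, and $M(\mathbf{x}_1,\dots,\mathbf{x}_k)=\sum_{\mathbf{i}\in V(T)^k}M_{\mathbf{i}}\prod_{j=1}^k x_{j i_j}$. *)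

theory Defs
  imports Complex_Main "HOL-Library.FuncSet"
begin

definition adj_rel :: "nat set set \<Rightarrow> (nat \<times> nat) set" where
  "adj_rel E = {(x, y). {x, y} \<in> E}"

definition graph_connected :: "nat set \<Rightarrow> nat set set \<Rightarrow> bool" where
  "graph_connected V E \<longleftrightarrow> (\<forall>x\<in>V. \<forall>y\<in>V. (x, y) \<in> (adj_rel E)\<^sup>*)"

definition simple_graph_on :: "nat set \<Rightarrow> nat set set \<Rightarrow> bool" where
  "simple_graph_on V E \<longleftrightarrow> (\<forall>e\<in>E. \<exists>a b. a \<noteq> b \<and> a \<in> V \<and> b \<in> V \<and> e = {a, b})"

definition acyclic_graph :: "nat set set \<Rightarrow> bool" where
  "acyclic_graph E \<longleftrightarrow> (\<forall>a b. {a, b} \<in> E \<longrightarrow> (a, b) \<notin> (adj_rel (E - {{a, b}}))\<^sup>*)"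

definition is_tree :: "nat \<Rightarrow> nat set set \<Rightarrow> bool" where
  "is_tree n E \<longleftrightarrow> simple_graph_on {1..n} E \<and> graph_connected {1..n} E \<and> acyclic_graph E"

definition steiner_dist :: "nat \<Rightarrow> nat set set \<Rightarrow> nat set \<Rightarrow> nat" where
  "steiner_dist n E U = (LEAST m. \<exists>V' E'. V' \<subseteq> {1..n} \<and> E' \<subseteq> E \<and>
       (\<forall>e\<in>E'. e \<subseteq> V') \<and> U \<subseteq> V' \<and> graph_connected V' E' \<and> card E' = m)"

text \<open>The k-linear form of the order-k Steiner distance hypermatrix:
  M(x_1,...,x_k) = sum over i in V(T)^k of S({i_1..i_k}) * prod_j x_j(i_j).
  Slots are indexed 0..k-1; vectors are functions on {1..n}.\<close>
definition steiner_form :: "nat \<Rightarrow> nat set set \<Rightarrow> nat \<Rightarrow> (nat \<Rightarrow> nat \<Rightarrow> real) \<Rightarrow> real" where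
  "steiner_form n E k x = (\<Sum>i\<in>{0..<k} \<rightarrow>\<^sub>E {1..n}.
       real (steiner_dist n E (i ` {0..<k})) * (\<Prod>j<k. x j (i j)))"

end

theory Submission imports Defs begin

abbreviation R :: "nat set set \<Rightarrow> (nat \<times> nat) set" where
  "R H \<equiv> (adj_rel H)\<^sup>*"

lemma adj_sym: "(x,y) \<in> adj_rel H \<Longrightarrow> (y,x) \<in> adj_rel H"
  by (simp add: adj_rel_def insert_commute)

lemma R_sym: "(x,y) \<in> R H \<Longrightarrow> (y,x) \<in> R H"
proof -
  have "sym (adj_rel H)" by (auto intro: symI adj_sym)
  then have "sym (R H)" by (rule sym_rtrancl)
  then show "(x,y) \<in> R H \<Longrightarrow> (y,x) \<in> R H" by (auto dest: symD)
qed

lemma adj_mono: "H \<subseteq> H' \<Longrightarrow> adj_rel H \<subseteq> adj_rel H'"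
  by (auto simp: adj_rel_def)

lemma R_mono: "H \<subseteq> H' \<Longrightarrow> (x,y) \<in> R H \<Longrightarrow> (x,y) \<in> R H'"
  using rtrancl_mono[OF adj_mono] by blast

lemma R_step: "{y,z} \<in> H \<Longrightarrow> (x,y) \<in> R H \<Longrightarrow> (x,z) \<in> R H"
  by (metis adj_rel_def case_prodI mem_Collect_eq rtrancl.rtrancl_into_rtrancl)

lemma L_cut:
  assumes "(x,v) \<in> R H"
  shows "(x,v) \<in> R (H - {{a,b}}) \<or> ((x,a) \<in> R (H - {{a,b}}) \<and> (b,v) \<in> R (H - {{a,b}}))
     \<or> ((x,b) \<in> R (H - {{a,b}}) \<and> (a,v) \<in> R (H - {{a,b}}))"
  using assms
proof (induction rule: rtrancl_induct)
  case base
  then show ?case by simp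
next
  case (step y z)
  have yz: "{y,z} \<in> H" using step(2) by (simp add: adj_rel_def)
  show ?case
  proof (cases "{y,z} = {a,b}")
    case True
    then have "(y = a \<and> z = b) \<or> (y = b \<and> z = a)" by (auto simp: doubleton_eq_iff)
    then show ?thesis using step(3) by auto
  next
    case False
    then have "{y,z} \<in> H - {{a,b}}" using yz by simp
    then show ?thesis using step(3) R_step[of y z "H - {{a,b}}"]
      by (meson R_step R_sym)
  qed
qed


context
  fixes n :: nat and E :: "nat set set"
  assumes tree: "is_tree n E"
begin

lemma edge_form: "e \<in> E \<Longrightarrow> \<exists>a b. a \<noteq> b \<and> a \<in> {1..n} \<and> b \<in> {1..n} \<and> e = {a,b}"
  using tree by (auto simp: is_tree_def simple_graph_on_def)

lemma E_fin: "finite E"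
proof -
  have "E \<subseteq> Pow {1..n}" using edge_form by blast
  then show ?thesis by (rule finite_subset) simp
qed

lemma conn: "x \<in> {1..n} \<Longrightarrow> y \<in> {1..n} \<Longrightarrow> (x,y) \<in> R E"
  using tree by (auto simp: is_tree_def graph_connected_def)

lemma acyc: "{a,b} \<in> E \<Longrightarrow> (a,b) \<notin> R (E - {{a,b}})"
  using tree by (auto simp: is_tree_def acyclic_graph_def)

lemma stayV: "(x,y) \<in> R H \<Longrightarrow> H \<subseteq> E \<Longrightarrow> x \<in> {1..n} \<Longrightarrow> y \<in> {1..n}"
proof (induction rule: rtrancl_induct)
  case base then show ?case by simp
next
  case (step y z)
  then have "{y,z} \<in> E" by (auto simp: adj_rel_def)
  then obtain a b where "a \<in> {1..n}" "b \<in> {1..n}" "{y,z} = {a,b}" using edge_form by blast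
  then show ?case by (auto simp: doubleton_eq_iff)
qed

lemma partition: "{a,b} \<in> E \<Longrightarrow> u \<in> {1..n} \<Longrightarrow> a \<in> {1..n} \<Longrightarrow>
   (a,u) \<in> R (E - {{a,b}}) \<or> (b,u) \<in> R (E - {{a,b}})"
  using L_cut[OF conn[of a u], of a b] by auto

definition sep :: "nat set \<Rightarrow> nat set \<Rightarrow> bool" where
  "sep e U \<longleftrightarrow> (\<exists>x\<in>U. \<exists>y\<in>U. (x,y) \<notin> R (E - {e}))"

lemma conn_U:
  assumes "finite G" "G \<subseteq> E - {e\<in>E. sep e U}" "U \<subseteq> {1..n}"
  shows "\<forall>x\<in>U. \<forall>y\<in>U. (x,y) \<in> R (E - G)"
  using assms(1,2)
proof (induction G rule: finite_induct)
  case empty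
  then show ?case using conn assms(3) by (simp add: subset_iff)
next
  case (insert e G)
  have eE: "e \<in> E" and ns: "\<not> sep e U" using insert by auto
  obtain a b where ab: "a \<noteq> b" "e = {a,b}" using edge_form eE by blast
  have eq: "E - insert e G = (E - G) - {{a,b}}" using ab by auto
  show ?case
  proof (intro ballI)
    fix x y assume xy: "x \<in> U" "y \<in> U"
    have c: "(x,y) \<in> R (E - G)" using insert xy by auto
    have sub: "(E - G) - {{a,b}} \<subseteq> E - {e}" using ab by auto
    have nsxy: "\<And>p q. p \<in> U \<Longrightarrow> q \<in> U \<Longrightarrow> (p,q) \<in> R (E - {e})" using ns by (auto simp: sep_def)
    have ac: "(a,b) \<notin> R (E - {e})" using acyc eE ab by auto
    from L_cut[OF c, of a b] show "(x,y) \<in> R (E - insert e G)"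
    proof (elim disjE conjE)
      assume "(x, y) \<in> R (E - G - {{a, b}})" then show ?thesis using eq by simp
    next
      assume h: "(x, a) \<in> R (E - G - {{a, b}})" "(b, y) \<in> R (E - G - {{a, b}})"
      have "(a,x) \<in> R (E - {e})" using R_mono[OF sub h(1)] R_sym by blast
      moreover have "(y,b) \<in> R (E - {e})" using R_mono[OF sub h(2)] R_sym by blast
      ultimately have "(a,b) \<in> R (E - {e})" using nsxy[OF xy] by (meson rtrancl_trans)
      then show ?thesis using ac by simp
    next
      assume h: "(x, b) \<in> R (E - G - {{a, b}})" "(a, y) \<in> R (E - G - {{a, b}})"
      have "(b,x) \<in> R (E - {e})" using R_mono[OF sub h(1)] R_sym by blast
      moreover have "(y,a) \<in> R (E - {e})" using R_mono[OF sub h(2)] R_sym by blast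
      ultimately have "(b,a) \<in> R (E - {e})" using nsxy[OF xy] by (meson rtrancl_trans)
      then show ?thesis using ac R_sym by blast
    qed
  qed
qed

lemma steiner_eq:
  assumes U: "U \<subseteq> {1..n}" "U \<noteq> {}"
  shows "steiner_dist n E U = card {e\<in>E. sep e U}"
proof -
  define F where "F = {e\<in>E. sep e U}"
  define Q where "Q = (\<lambda>m. \<exists>V' E'. V' \<subseteq> {1..n} \<and> E' \<subseteq> E \<and>
       (\<forall>e\<in>E'. e \<subseteq> V') \<and> U \<subseteq> V' \<and> graph_connected V' E' \<and> card E' = m)"
  have FE: "F \<subseteq> E" by (auto simp: F_def)
  have lower: "card F \<le> m" if "Q m" for m
  proof -
    obtain V' E' where h: "V' \<subseteq> {1..n}" "E' \<subseteq> E" "U \<subseteq> V'" "graph_connected V' E'" "card E' = m"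
      using \<open>Q m\<close> unfolding Q_def by blast
    have "F \<subseteq> E'"
    proof
      fix e assume "e \<in> F"
      then obtain x y where xy: "x \<in> U" "y \<in> U" "(x,y) \<notin> R (E - {e})" by (auto simp: F_def sep_def)
      show "e \<in> E'"
      proof (rule ccontr)
        assume "e \<notin> E'"
        then have "E' \<subseteq> E - {e}" using h by auto
        moreover have "(x,y) \<in> R E'" using h(3,4) xy unfolding graph_connected_def by blast
        ultimately show False using R_mono xy by blast
      qed
    qed
    moreover have "finite E'" using h(2) E_fin finite_subset by blast
    ultimately show ?thesis using card_mono h by blast
  qed
  obtain u0 where u0: "u0 \<in> U" using U by auto
  have cU: "\<forall>x\<in>U. \<forall>y\<in>U. (x,y) \<in> R F"
  proof -
    have "\<forall>x\<in>U. \<forall>y\<in>U. (x,y) \<in> R (E - (E - F))"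
      by (rule conn_U) (use U E_fin in \<open>auto simp: F_def\<close>)
    moreover have "E - (E - F) = F" using FE by auto
    ultimately show ?thesis by simp
  qed
  define V' where "V' = {v. (u0,v) \<in> R F}"
  define E' where "E' = {e\<in>F. e \<subseteq> V'}"
  have inE': "(u0,v) \<in> R E'" if "(u0,v) \<in> R F" for v
    using that
  proof (induction rule: rtrancl_induct)
    case base then show ?case by simp
  next
    case (step y z)
    have "{y,z} \<in> F" using step(2) by (simp add: adj_rel_def)
    moreover have "y \<in> V'" "z \<in> V'" using step(1,2) by (auto simp: V'_def)
    ultimately have "{y,z} \<in> E'" by (auto simp: E'_def)
    then show ?case using step(3) R_step by blast
  qed
  have "Q (card E')"
    unfolding Q_def
  proof (intro exI conjI)
    show "V' \<subseteq> {1..n}" using stayV FE u0 U by (auto simp: V'_def)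
    show "E' \<subseteq> E" using FE by (auto simp: E'_def)
    show "\<forall>e\<in>E'. e \<subseteq> V'" by (auto simp: E'_def)
    show "U \<subseteq> V'" using cU u0 by (auto simp: V'_def)
    show "graph_connected V' E'"
      unfolding graph_connected_def
    proof (intro ballI)
      fix x y assume "x \<in> V'" "y \<in> V'"
      then have "(u0,x) \<in> R E'" "(u0,y) \<in> R E'" using inE' by (auto simp: V'_def)
      then show "(x,y) \<in> R E'" using R_sym by (meson rtrancl_trans)
    qed
  qed simp
  moreover have "card E' \<le> card F"
    by (rule card_mono) (use FE E_fin finite_subset in \<open>auto simp: E'_def\<close>)
  ultimately have QF: "Q (card F)" using lower by (metis le_antisym)
  have "steiner_dist n E U = (LEAST m. Q m)" unfolding steiner_dist_def Q_def by simp
  also have "\<dots> = card F" by (rule Least_equality[of Q, OF QF lower])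
  finally show ?thesis by (simp add: F_def)
qed


lemma unique_exist:
  assumes v: "v \<in> {1..n}" and u: "u \<in> {1..n}"
  shows "u = v \<or> (\<exists>w. {v,w} \<in> E \<and> (v,u) \<notin> R (E - {{v,w}}))"
proof -
  have "(v,u) \<in> R E" using conn v u by blast
  then show ?thesis
  proof (induction rule: rtrancl_induct)
    case base then show ?case by simp
  next
    case (step y z)
    have yz: "{y,z} \<in> E" using step(2) by (simp add: adj_rel_def)
    show ?case
    proof (cases "z = v")
      case True then show ?thesis by simp
    next
      case zv: False
      from step(3) show ?thesis
      proof
        assume "y = v"
        then have vz: "{v,z} \<in> E" using yz by simp
        have "(v,z) \<notin> R (E - {{v,z}})" by (rule acyc[OF vz])
        with vz show ?thesis by blast
      next
        assume "\<exists>w. {v,w} \<in> E \<and> (v,y) \<notin> R (E - {{v,w}})"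
        then obtain w where w: "{v,w} \<in> E" "(v,y) \<notin> R (E - {{v,w}})" by blast
        have "(v,z) \<notin> R (E - {{v,w}})"
        proof
          assume vz: "(v,z) \<in> R (E - {{v,w}})"
          show False
          proof (cases "{y,z} = {v,w}")
            case True
            then have "y = v" using zv by (auto simp: doubleton_eq_iff)
            then show False using w(2) by simp
          next
            case False
            have "{z,y} = {y,z}" by (rule insert_commute)
            then have "{z,y} \<in> E - {{v,w}}" using yz False by simp
            then have "(v,y) \<in> R (E - {{v,w}})" using vz by (rule R_step)
            then show False using w(2) by simp
          qed
        qed
        with w(1) show ?thesis by blast
      qed
    qed
  qed
qed

lemma unique_uniq:
  assumes v: "v \<in> {1..n}" and u: "u \<in> {1..n}"
    and h1: "{v,w1} \<in> E" "(v,u) \<notin> R (E - {{v,w1}})"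
    and h2: "{v,w2} \<in> E" "(v,u) \<notin> R (E - {{v,w2}})"
  shows "w1 = w2"
proof (rule ccontr)
  assume ne: "w1 \<noteq> w2"
  then have ne': "{v,w1} \<noteq> {v,w2}" by (auto simp: doubleton_eq_iff)
  have "(v,u) \<in> R (E - {{v,w1}}) \<or> (w1,u) \<in> R (E - {{v,w1}})" by (rule partition[OF h1(1) u v])
  then have wu: "(w1,u) \<in> R (E - {{v,w1}})" using h1(2) by simp
  have sub1: "E - {{v, w1}} - {{v, w2}} \<subseteq> E - {{v,w2}}" by blast
  have sub2: "E - {{v, w1}} - {{v, w2}} \<subseteq> E - {{v,w1}}" by blast
  from L_cut[OF wu, of v w2] show False
  proof (elim disjE conjE)
    assume "(w1, u) \<in> R (E - {{v, w1}} - {{v, w2}})"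
    then have a: "(w1,u) \<in> R (E - {{v,w2}})" by (rule R_mono[OF sub1])
    have "{v,w1} \<in> E - {{v,w2}}" using h1(1) ne' by simp
    then have "(v,w1) \<in> R (E - {{v,w2}})" using rtrancl_refl by (rule R_step)
    then have "(v,u) \<in> R (E - {{v,w2}})" using a by (rule rtrancl_trans)
    then show False using h2(2) by simp
  next
    assume "(w1, v) \<in> R (E - {{v, w1}} - {{v, w2}})"
    then have "(w1,v) \<in> R (E - {{v,w1}})" by (rule R_mono[OF sub2])
    then have "(v,w1) \<in> R (E - {{v,w1}})" by (rule R_sym)
    then show False using acyc[OF h1(1)] by simp
  next
    assume "(v, u) \<in> R (E - {{v, w1}} - {{v, w2}})"
    then have "(v,u) \<in> R (E - {{v,w1}})" by (rule R_mono[OF sub2])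
    then show False using h1(2) by simp
  qed
qed

lemma unique_w:
  assumes v: "v \<in> {1..n}" and u: "u \<in> {1..n}" and uv: "u \<noteq> v"
  shows "\<exists>!w. {v,w} \<in> E \<and> (v,u) \<notin> R (E - {{v,w}})"
proof (rule ex_ex1I)
  show "\<exists>w. {v,w} \<in> E \<and> (v,u) \<notin> R (E - {{v,w}})" using unique_exist[OF v u] uv by simp
next
  fix w1 w2
  assume "{v,w1} \<in> E \<and> (v,u) \<notin> R (E - {{v,w1}})" "{v,w2} \<in> E \<and> (v,u) \<notin> R (E - {{v,w2}})"
  then show "w1 = w2" using unique_uniq[OF v u] by blast
qed

lemma sep_iff:
  assumes ab: "{a,b} \<in> E" "a \<in> {1..n}" and U: "U \<subseteq> {1..n}" "U \<noteq> {}"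
  defines "A \<equiv> {u\<in>{1..n}. (a,u) \<in> R (E - {{a,b}})}"
  shows "sep {a,b} U \<longleftrightarrow> \<not> U \<subseteq> A \<and> \<not> U \<subseteq> {1..n} - A"
proof
  assume s: "sep {a,b} U"
  then obtain x y where xy: "x \<in> U" "y \<in> U" "(x,y) \<notin> R (E - {{a,b}})" unfolding sep_def by blast
  show "\<not> U \<subseteq> A \<and> \<not> U \<subseteq> {1..n} - A"
  proof
    show "\<not> U \<subseteq> A"
    proof
      assume "U \<subseteq> A"
      then have "x \<in> A" "y \<in> A" using xy by blast+
      then have 1: "(a,x) \<in> R (E - {{a,b}})" and 2: "(a,y) \<in> R (E - {{a,b}})" unfolding A_def by simp_all
      have "(x,a) \<in> R (E - {{a,b}})" using R_sym[OF 1] .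
      then have "(x,y) \<in> R (E - {{a,b}})" using 2 by (rule rtrancl_trans)
      then show False using xy(3) by simp
    qed
    show "\<not> U \<subseteq> {1..n} - A"
    proof
      assume "U \<subseteq> {1..n} - A"
      then have xV: "x \<in> {1..n}" "x \<notin> A" "y \<in> {1..n}" "y \<notin> A" using xy by blast+
      then have "(a,x) \<notin> R (E - {{a,b}})" "(a,y) \<notin> R (E - {{a,b}})" unfolding A_def by simp_all
      then have 1: "(b,x) \<in> R (E - {{a,b}})" and 2: "(b,y) \<in> R (E - {{a,b}})"
        using partition[OF ab(1) xV(1) ab(2)] partition[OF ab(1) xV(3) ab(2)] by simp_all
      have "(x,b) \<in> R (E - {{a,b}})" using R_sym[OF 1] .
      then have "(x,y) \<in> R (E - {{a,b}})" using 2 by (rule rtrancl_trans)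
      then show False using xy(3) by simp
    qed
  qed
next
  assume h: "\<not> U \<subseteq> A \<and> \<not> U \<subseteq> {1..n} - A"
  show "sep {a,b} U"
  proof (rule ccontr)
    assume "\<not> sep {a,b} U"
    then have c: "\<And>x y. x \<in> U \<Longrightarrow> y \<in> U \<Longrightarrow> (x,y) \<in> R (E - {{a,b}})" unfolding sep_def by blast
    obtain x0 where x0: "x0 \<in> U" using U by auto
    show False
    proof (cases "x0 \<in> A")
      case True
      then have ax0: "(a,x0) \<in> R (E - {{a,b}})" unfolding A_def by simp
      have "U \<subseteq> A"
      proof
        fix y assume y: "y \<in> U"
        have "(a,y) \<in> R (E - {{a,b}})" using ax0 c[OF x0 y] by (rule rtrancl_trans)
        moreover have "y \<in> {1..n}" using y U by blast
        ultimately show "y \<in> A" unfolding A_def by simp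
      qed
      then show False using h by simp
    next
      case False
      have "U \<subseteq> {1..n} - A"
      proof
        fix y assume y: "y \<in> U"
        have "y \<notin> A"
        proof
          assume "y \<in> A"
          then have ay: "(a,y) \<in> R (E - {{a,b}})" unfolding A_def by simp
          have "(a,x0) \<in> R (E - {{a,b}})" using ay c[OF y x0] by (rule rtrancl_trans)
          moreover have "x0 \<in> {1..n}" using x0 U by blast
          ultimately have "x0 \<in> A" unfolding A_def by simp
          then show False using False by simp
        qed
        then show "y \<in> {1..n} - A" using y U by blast
      qed
      then show False using h by simp
    qed
  qed
qed

end

lemma PiE_pow:
  fixes c :: "nat \<Rightarrow> real"
  assumes "finite X"
  shows "(\<Sum>i\<in>{0..<k} \<rightarrow>\<^sub>E X. \<Prod>j\<in>{0..<k}. c (i j)) = (\<Sum>x\<in>X. c x) ^ k"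
  using prod_sum_PiE[of "{0..<k}" "\<lambda>_. X" "\<lambda>_ y. c y"] assms by simp

context
  fixes n :: nat and E :: "nat set set"
  assumes tree: "is_tree n E"
begin

lemma term_eq:
  fixes c :: "nat \<Rightarrow> real" and k :: nat
  assumes ab: "{a,b} \<in> E" "a \<in> {1..n}" and k: "k > 0"
  defines "A \<equiv> {u\<in>{1..n}. (a,u) \<in> R (E - {{a,b}})}"
  shows "(\<Sum>i\<in>{i\<in>{0..<k} \<rightarrow>\<^sub>E {1..n}. sep E {a,b} (i ` {0..<k})}. \<Prod>j\<in>{0..<k}. c (i j))
     = (\<Sum>x\<in>{1..n}. c x) ^ k - (\<Sum>x\<in>A. c x) ^ k - (\<Sum>x\<in>{1..n} - A. c x) ^ k"
proof -
  let ?K = "{0..<k}" and ?V = "{1..n::nat}"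
  let ?P = "?K \<rightarrow>\<^sub>E ?V"
  let ?f = "\<lambda>i. \<Prod>j\<in>?K. c (i j)"
  have AV: "A \<subseteq> ?V" by (auto simp: A_def)
  have mem: "i \<in> ?K \<rightarrow>\<^sub>E X \<longleftrightarrow> i \<in> ?P \<and> i ` ?K \<subseteq> X" if "X \<subseteq> ?V" for i X
    using that by (auto simp: PiE_iff)
  have Kne: "?K \<noteq> {}" using k by simp
  have set_eq: "{i\<in>?P. sep E {a,b} (i ` ?K)} = ?P - ((?K \<rightarrow>\<^sub>E A) \<union> (?K \<rightarrow>\<^sub>E (?V - A)))"
  proof -
    have "sep E {a,b} (i ` ?K) \<longleftrightarrow> \<not> i ` ?K \<subseteq> A \<and> \<not> i ` ?K \<subseteq> ?V - A" if "i \<in> ?P" for i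
      unfolding A_def
      by (rule sep_iff[OF tree ab]) (use that Kne in \<open>auto simp: PiE_iff\<close>)
    then show ?thesis using mem[of A] mem[of "?V - A"] AV by blast
  qed
  have fin: "finite ?P" by (simp add: finite_PiE)
  have disj: "(?K \<rightarrow>\<^sub>E A) \<inter> (?K \<rightarrow>\<^sub>E (?V - A)) = {}"
  proof -
    { fix i assume "i \<in> (?K \<rightarrow>\<^sub>E A)" "i \<in> (?K \<rightarrow>\<^sub>E (?V - A))"
      then have "i 0 \<in> A" "i 0 \<notin> A" using k by (auto simp: PiE_iff) 
      then have False by simp }
    then show ?thesis by blast
  qed
  have sub: "(?K \<rightarrow>\<^sub>E A) \<union> (?K \<rightarrow>\<^sub>E (?V - A)) \<subseteq> ?P" using mem AV by blast
  have finA: "finite A" using AV finite_subset by blast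
  have "(\<Sum>i\<in>{i\<in>?P. sep E {a,b} (i ` ?K)}. ?f i) = sum ?f ?P - sum ?f ((?K \<rightarrow>\<^sub>E A) \<union> (?K \<rightarrow>\<^sub>E (?V - A)))"
    unfolding set_eq by (rule sum_diff[OF fin sub])
  also have "\<dots> = sum ?f ?P - sum ?f (?K \<rightarrow>\<^sub>E A) - sum ?f (?K \<rightarrow>\<^sub>E (?V - A))"
    by (subst sum.union_disjoint) (use disj finA in \<open>auto simp: finite_PiE\<close>)
  also have "\<dots> = (\<Sum>x\<in>?V. c x) ^ k - (\<Sum>x\<in>A. c x) ^ k - (\<Sum>x\<in>?V - A. c x) ^ k"
    using finA by (simp add: PiE_pow)
  finally show ?thesis .
qed


lemma far_sum_zero_imp:
  fixes c :: "nat \<Rightarrow> real"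
  assumes far: "\<And>w. {v,w} \<in> E \<Longrightarrow> (\<Sum>u\<in>{u\<in>{1..n}. (v,u) \<notin> R (E - {{v,w}})}. c u) = 0"
    and s0: "(\<Sum>i=1..n. c i) = 0" and v: "v \<in> {1..n}"
  shows "c v = 0"
proof -
  let ?V = "{1..n::nat}"
  define N where "N = {w. {v,w} \<in> E}"
  have NV: "N \<subseteq> ?V"
  proof
    fix w assume "w \<in> N"
    then have "{v,w} \<in> E" by (simp add: N_def)
    then obtain a b where "a \<in> ?V" "b \<in> ?V" "{v,w} = {a,b}" using edge_form[OF tree] by blast
    then show "w \<in> ?V" by (auto simp: doubleton_eq_iff)
  qed
  have finN: "finite N" using NV finite_subset by blast
  have inner: "(\<Sum>w\<in>N. if (v,u) \<notin> R (E - {{v,w}}) then c u else 0) = (if u = v then 0 else c u)"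
    if u: "u \<in> ?V" for u
  proof (cases "u = v")
    case True then show ?thesis by simp
  next
    case False
    obtain w0 where w0: "{v,w0} \<in> E \<and> (v,u) \<notin> R (E - {{v,w0}})"
      and uq: "\<forall>w. {v,w} \<in> E \<and> (v,u) \<notin> R (E - {{v,w}}) \<longrightarrow> w = w0"
      using ex1E[OF unique_w[OF tree v u False]] by metis
    have "{w\<in>N. (v,u) \<notin> R (E - {{v,w}})} = {w0}"
    proof
      show "{w\<in>N. (v,u) \<notin> R (E - {{v,w}})} \<subseteq> {w0}" using uq unfolding N_def by blast
      show "{w0} \<subseteq> {w\<in>N. (v,u) \<notin> R (E - {{v,w}})}" using w0 unfolding N_def by blast
    qed
    then have "(\<Sum>w\<in>N. if (v,u) \<notin> R (E - {{v,w}}) then c u else 0) = (\<Sum>w\<in>{w0}. c u)"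
      using sum.inter_filter[OF finN, of "\<lambda>_. c u" "\<lambda>w. (v,u) \<notin> R (E - {{v,w}})"] by simp
    then show ?thesis using False by simp
  qed
  have "(\<Sum>u\<in>?V. if u = v then 0 else c u) = (\<Sum>u\<in>?V. \<Sum>w\<in>N. if (v,u) \<notin> R (E - {{v,w}}) then c u else 0)"
    by (rule sum.cong[OF refl]) (simp add: inner)
  also have "\<dots> = (\<Sum>w\<in>N. \<Sum>u\<in>?V. if (v,u) \<notin> R (E - {{v,w}}) then c u else 0)"
    by (rule sum.swap)
  also have "\<dots> = (\<Sum>w\<in>N. \<Sum>u\<in>{u\<in>?V. (v,u) \<notin> R (E - {{v,w}})}. c u)"
    by (rule sum.cong[OF refl]) (rule sum.inter_filter[symmetric], simp)
  also have "\<dots> = 0"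
  proof (rule sum.neutral, rule ballI)
    fix w assume "w \<in> N"
    then have "{v,w} \<in> E" by (simp add: N_def)
    then show "(\<Sum>u\<in>{u\<in>?V. (v,u) \<notin> R (E - {{v,w}})}. c u) = 0" by (rule far)
  qed
  finally have z: "(\<Sum>u\<in>?V. if u = v then 0 else c u) = 0" .
  have "(\<Sum>u\<in>?V. if u = v then 0 else c u) = (\<Sum>u\<in>?V. c u) - c v"
  proof -
    have "(\<Sum>u\<in>?V. c u) = (\<Sum>u\<in>?V. (if u = v then 0 else c u) + (if u = v then c u else 0))"
      by (rule sum.cong) auto
    also have "\<dots> = (\<Sum>u\<in>?V. if u = v then 0 else c u) + c v"
      using v by (simp add: sum.distrib)
    finally show ?thesis by simp
  qed
  then show ?thesis using z s0 by simp
qed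

end

theorem mainTheorem4:
  fixes n k :: nat and E :: "nat set set" and c :: "nat \<Rightarrow> real"
  assumes "is_tree n E" and "n \<ge> 3" and "k \<ge> 2" and "even k"
    and "\<exists>i\<in>{1..n}. c i \<noteq> 0"
    and "(\<Sum>i=1..n. c i) = 0"
  shows "steiner_form n E k (\<lambda>_. c) < 0"
proof -
  note tree = assms(1)
  let ?K = "{0..<k}" and ?V = "{1..n::nat}"
  let ?P = "?K \<rightarrow>\<^sub>E ?V"
  let ?f = "\<lambda>i. \<Prod>j\<in>?K. c (i j)"
  define tm where "tm = (\<lambda>e. \<Sum>i\<in>{i\<in>?P. sep E e (i ` ?K)}. ?f i)"
  have kpos: "k > 0" using assms(3) by simp
  have finE: "finite E" using E_fin[OF tree] .
  have finP: "finite ?P" by (simp add: finite_PiE)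
  have rng: "i ` ?K \<subseteq> ?V" "i ` ?K \<noteq> {}" if "i \<in> ?P" for i
    using that kpos by (auto simp: PiE_iff)
  have "steiner_form n E k (\<lambda>_. c) = (\<Sum>i\<in>?P. real (card {e\<in>E. sep E e (i ` ?K)}) * ?f i)"
    unfolding steiner_form_def
    by (rule sum.cong) (auto simp: steiner_eq[OF tree rng] lessThan_atLeast0)
  also have "\<dots> = (\<Sum>i\<in>?P. \<Sum>e\<in>E. if sep E e (i ` ?K) then ?f i else 0)"
    by (rule sum.cong) (auto simp: sum.inter_filter[OF finE, symmetric])
  also have "\<dots> = (\<Sum>e\<in>E. \<Sum>i\<in>?P. if sep E e (i ` ?K) then ?f i else 0)"
    by (rule sum.swap)
  also have "\<dots> = (\<Sum>e\<in>E. tm e)"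
    unfolding tm_def by (rule sum.cong[OF refl]) (rule sum.inter_filter[OF finP, symmetric])
  finally have form: "steiner_form n E k (\<lambda>_. c) = (\<Sum>e\<in>E. tm e)" .
  have tm_eq: "tm e = - 2 * (\<Sum>x\<in>{u\<in>?V. (a,u) \<in> R (E - {{a,b}})}. c x) ^ k"
    if e: "e \<in> E" "e = {a,b}" "a \<in> ?V" for e a b
  proof -
    define A where "A = {u\<in>?V. (a,u) \<in> R (E - {{a,b}})}"
    have AV: "A \<subseteq> ?V" by (auto simp: A_def)
    have "(\<Sum>x\<in>?V - A. c x) = (\<Sum>x\<in>?V. c x) - (\<Sum>x\<in>A. c x)"
      by (rule sum_diff) (use AV in auto)
    then have nb: "(\<Sum>x\<in>?V - A. c x) = - (\<Sum>x\<in>A. c x)" using assms(6) by simp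
    have "tm e = (\<Sum>x\<in>?V. c x) ^ k - (\<Sum>x\<in>A. c x) ^ k - (\<Sum>x\<in>?V - A. c x) ^ k"
      unfolding tm_def A_def e(2) by (rule term_eq[OF tree]) (use e kpos in auto)
    also have "\<dots> = - 2 * (\<Sum>x\<in>A. c x) ^ k"
      using assms(4,6) kpos nb by simp
    finally show ?thesis by (simp add: A_def)
  qed
  have tm_le: "tm e \<le> 0" if eE: "e \<in> E" for e
  proof -
    obtain a b where ab: "a \<noteq> b" "a \<in> ?V" "e = {a,b}" using edge_form[OF tree eE] by blast
    have "0 \<le> (\<Sum>x\<in>{u\<in>?V. (a,u) \<in> R (E - {{a,b}})}. c x) ^ k"
      using assms(4) by (simp add: zero_le_even_power)
    then show ?thesis using tm_eq[OF eE ab(3) ab(2)] by simp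
  qed
  show ?thesis
  proof (rule ccontr)
    assume "\<not> steiner_form n E k (\<lambda>_. c) < 0"
    then have "(\<Sum>e\<in>E. - tm e) \<le> 0" using form by (simp add: sum_negf)
    moreover have "\<forall>e\<in>E. 0 \<le> - tm e" using tm_le by simp
    ultimately have all0: "\<forall>e\<in>E. tm e = 0"
      using sum_nonneg_eq_0_iff[OF finE, of "\<lambda>e. - tm e"] sum_nonneg[of E "\<lambda>e. - tm e"] by auto
    have far: "(\<Sum>u\<in>{u\<in>?V. (v,u) \<notin> R (E - {{v,w}})}. c u) = 0" if vw: "{v,w} \<in> E" "v \<in> ?V" for v w
    proof -
      define A where "A = {u\<in>?V. (v,u) \<in> R (E - {{v,w}})}"
      have "- 2 * (\<Sum>x\<in>A. c x) ^ k = 0" using tm_eq[OF vw(1) refl vw(2)] all0 vw(1) by (simp add: A_def)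
      then have a0: "(\<Sum>x\<in>A. c x) = 0" by simp
      have eqs: "{u\<in>?V. (v,u) \<notin> R (E - {{v,w}})} = ?V - A" by (auto simp: A_def)
      have "(\<Sum>x\<in>?V - A. c x) = (\<Sum>x\<in>?V. c x) - (\<Sum>x\<in>A. c x)"
        by (rule sum_diff) (auto simp: A_def)
      then show ?thesis using eqs a0 assms(6) by simp
    qed
    have "c v = 0" if "v \<in> ?V" for v
      by (rule far_sum_zero_imp[OF tree _ assms(6) that]) (use far that in blast)
    then show False using assms(5) by blast
  qed
qed
end
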